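(* Let $G=(V,E)$ be a control flow graph, let $p$ be a predicate node with successors $s_1,s_2$ in $G$ and with at least two successors in $A_p$. If $V_1\cap V_2\neq\emptyset$, then there are no nodes $a,b$ that are DOD on $p$.
   Context: A control flow graph (CFG) is a finite directed graph $G=(V,E)$ in which every node has at most two outgoing edges; nodes with exactly two outgoing edges are predicate nodes. A path from $n_1$ is a nonempty finite or infinite sequence of nodes with each adjacent pair an edge; it is maximal if it is infinite or its last node has no successor. $V_p$ is the set of nodes occurring on all maximal paths from $p$ in $G$. For $V'\subseteq V$, a $V'$-interval from $x$ to $y$ is a finite path $n_1\ldots n_k$ in $G$ with $k\ge 2$, $n_1=x\in V'$, $n_k=y\in V'$, and $n_i\notin V'$ for $1<i<k$. $A_p$ is the directed graph with node set $V_p$ and an edge $(x,y)$ iff there is a $V_p$-interval from $x$ to $y$ in $G$. For $i\in\{1,2\}$, $V_i$ is the set of nodes $n\in V_p$ such that there is a finite path in $G$ from $s_i$ to $n$ whose nodes other than the last one all lie outside $V_p$ (possibly $n=s_i$). For three distinct nodes $p,a,b$ with $p$ a predicate node with successors $s_1,s_2$, the nodes $a,b$ are DOD on $p$ if all maximal paths from $p$ contain both $a$ and $b$, all maximal paths from $s_1$ contain $a$ before any occurrence of $b$, and all maximal paths from $s_2$ contain $b$ before any occurrence of $a$. *)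

theory Defs
  imports Main "HOL-Library.Extended_Nat"
begin

definition succs :: "('v \<times> 'v) set \<Rightarrow> 'v \<Rightarrow> 'v set" where
  "succs E n = {m. (n, m) \<in> E}"

definition cfg :: "'v set \<Rightarrow> ('v \<times> 'v) set \<Rightarrow> bool" where
  "cfg V E \<longleftrightarrow> finite V \<and> E \<subseteq> V \<times> V \<and> (\<forall>n \<in> V. card (succs E n) \<le> 2)"

definition pred_node :: "('v \<times> 'v) set \<Rightarrow> 'v \<Rightarrow> 'v \<Rightarrow> 'v \<Rightarrow> bool" where
  "pred_node E p s1 s2 \<longleftrightarrow> s1 \<noteq> s2 \<and> succs E p = {s1, s2}"

definition fpath :: "('v \<times> 'v) set \<Rightarrow> 'v list \<Rightarrow> bool" where
  "fpath E xs \<longleftrightarrow> xs \<noteq> [] \<and> (\<forall>i. Suc i < length xs \<longrightarrow> (xs ! i, xs ! Suc i) \<in> E)"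

text \<open>A (finite or infinite) path is represented by a node sequence f together with
  its number of nodes n :: enat (n = \<infinity> for infinite paths, n \<ge> 1).\<close>
definition gpath :: "('v \<times> 'v) set \<Rightarrow> (nat \<Rightarrow> 'v) \<times> enat \<Rightarrow> bool" where
  "gpath E \<pi> \<longleftrightarrow> (case \<pi> of (f, n) \<Rightarrow>
      0 < n \<and> (\<forall>i. enat (Suc i) < n \<longrightarrow> (f i, f (Suc i)) \<in> E))"

definition maximal_path_from :: "('v \<times> 'v) set \<Rightarrow> 'v \<Rightarrow> (nat \<Rightarrow> 'v) \<times> enat \<Rightarrow> bool" where
  "maximal_path_from E x \<pi> \<longleftrightarrow> gpath E \<pi> \<and> fst \<pi> 0 = x \<and>
     (snd \<pi> = \<infinity> \<or> (\<exists>k. snd \<pi> = enat (Suc k) \<and> succs E (fst \<pi> k) = {}))"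

definition occurs :: "'v \<Rightarrow> (nat \<Rightarrow> 'v) \<times> enat \<Rightarrow> bool" where
  "occurs x \<pi> \<longleftrightarrow> (\<exists>i. enat i < snd \<pi> \<and> fst \<pi> i = x)"

definition occurs_before :: "'v \<Rightarrow> 'v \<Rightarrow> (nat \<Rightarrow> 'v) \<times> enat \<Rightarrow> bool" where
  "occurs_before a b \<pi> \<longleftrightarrow>
     (\<exists>i. enat i < snd \<pi> \<and> fst \<pi> i = a \<and> (\<forall>j \<le> i. fst \<pi> j \<noteq> b))"

definition Vp :: "'v set \<Rightarrow> ('v \<times> 'v) set \<Rightarrow> 'v \<Rightarrow> 'v set" where
  "Vp V E p = {x \<in> V. \<forall>\<pi>. maximal_path_from E p \<pi> \<longrightarrow> occurs x \<pi>}"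

definition interval :: "('v \<times> 'v) set \<Rightarrow> 'v set \<Rightarrow> 'v \<Rightarrow> 'v \<Rightarrow> 'v list \<Rightarrow> bool" where
  "interval E V' x y xs \<longleftrightarrow> fpath E xs \<and> length xs \<ge> 2 \<and> hd xs = x \<and> x \<in> V'
     \<and> last xs = y \<and> y \<in> V' \<and> (\<forall>i. 0 < i \<and> i < length xs - 1 \<longrightarrow> xs ! i \<notin> V')"

text \<open>Edge set of the graph A_p (its node set is V_p).\<close>
definition Ap_edges :: "'v set \<Rightarrow> ('v \<times> 'v) set \<Rightarrow> 'v \<Rightarrow> ('v \<times> 'v) set" where
  "Ap_edges V E p = {(x, y). \<exists>xs. interval E (Vp V E p) x y xs}"

definition Vsucc :: "'v set \<Rightarrow> ('v \<times> 'v) set \<Rightarrow> 'v \<Rightarrow> 'v \<Rightarrow> 'v set" where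
  "Vsucc V E p s = {n \<in> Vp V E p. \<exists>xs. fpath E xs \<and> hd xs = s \<and> last xs = n
      \<and> (\<forall>x \<in> set (butlast xs). x \<notin> Vp V E p)}"

definition DOD :: "('v \<times> 'v) set \<Rightarrow> 'v \<Rightarrow> 'v \<Rightarrow> 'v \<Rightarrow> 'v \<Rightarrow> 'v \<Rightarrow> bool" where
  "DOD E p s1 s2 a b \<longleftrightarrow> p \<noteq> a \<and> p \<noteq> b \<and> a \<noteq> b \<and> pred_node E p s1 s2 \<and>
     (\<forall>\<pi>. maximal_path_from E p \<pi> \<longrightarrow> occurs a \<pi> \<and> occurs b \<pi>) \<and>
     (\<forall>\<pi>. maximal_path_from E s1 \<pi> \<longrightarrow> occurs_before a b \<pi>) \<and>
     (\<forall>\<pi>. maximal_path_from E s2 \<pi> \<longrightarrow> occurs_before b a \<pi>)"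

end

theory Submission
  imports Defs
begin

lemma ex_maximal: "\<exists>\<pi>. maximal_path_from E x \<pi>"
proof -
  define st where "st = (\<lambda>y. if succs E y = {} then y else SOME z. (y,z) \<in> E)"
  define g where "g = (\<lambda>i. (st ^^ i) x)"
  have gS: "g (Suc i) = st (g i)" for i by (simp add: g_def)
  have edge: "succs E (g i) \<noteq> {} \<Longrightarrow> (g i, g (Suc i)) \<in> E" for i
    unfolding gS st_def succs_def by (auto intro: someI)
  show ?thesis
  proof (cases "\<forall>i. succs E (g i) \<noteq> {}")
    case True
    then have "maximal_path_from E x (g, \<infinity>)"
      unfolding maximal_path_from_def gpath_def using edge by (auto simp: g_def)
    then show ?thesis by blast
  next
    case False
    define k where "k = (LEAST i. succs E (g i) = {})"
    have k1: "succs E (g k) = {}" using False unfolding k_def by (metis (mono_tags, lifting) LeastI)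
    have k2: "i < k \<Longrightarrow> succs E (g i) \<noteq> {}" for i unfolding k_def using not_less_Least by blast
    have "maximal_path_from E x (g, enat (Suc k))"
      unfolding maximal_path_from_def gpath_def using edge k1 k2 by (auto simp: g_def zero_enat_def)
    then show ?thesis by blast
  qed
qed

lemma key:
  assumes xs: "fpath E xs" "hd xs = s" "last xs = n"
    and mp: "maximal_path_from E n (f,m)"
    and nab: "\<forall>x\<in>set (butlast xs). x \<noteq> a \<and> x \<noteq> b"
    and ob: "\<forall>\<pi>. maximal_path_from E s \<pi> \<longrightarrow> occurs_before a b \<pi>"
  shows "occurs_before a b (f,m)"
proof -
  define L where "L = length xs - 1"
  have ne: "xs \<noteq> []" using xs unfolding fpath_def by auto
  define h where "h = (\<lambda>i. if i < L then xs ! i else f (i - L))"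
  have bl: "i < L \<Longrightarrow> xs ! i \<in> set (butlast xs)" for i
    by (metis L_def length_butlast nth_butlast nth_mem)
  have lastL: "xs ! L = n" using xs(3) ne by (simp add: L_def last_conv_nth)
  have f0: "f 0 = n" using mp by (simp add: maximal_path_from_def)
  have fe: "\<And>i. enat (Suc i) < m \<Longrightarrow> (f i, f (Suc i)) \<in> E" and m0: "0 < m"
    using mp by (auto simp: maximal_path_from_def gpath_def)
  have xe: "\<And>i. Suc i < length xs \<Longrightarrow> (xs ! i, xs ! Suc i) \<in> E" using xs by (simp add: fpath_def)
  have "maximal_path_from E s (h, m + enat L)"
    unfolding maximal_path_from_def gpath_def
  proof (simp only: prod.case fst_conv snd_conv, intro conjI allI impI)
    show "0 < m + enat L" using m0 by (cases m) (auto simp: zero_enat_def)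
    show "h 0 = s" using xs(2) ne f0 lastL by (auto simp: h_def hd_conv_nth)
  next
    fix i assume a: "enat (Suc i) < m + enat L"
    show "(h i, h (Suc i)) \<in> E"
    proof (cases "Suc i < L")
      case True then show ?thesis using xe[of i] by (simp add: h_def L_def)
    next
      case F: False
      show ?thesis
      proof (cases "i < L")
        case True
        then have "Suc i = L" using F by simp
        then show ?thesis using xe[of i] True lastL f0 by (simp add: h_def L_def)
      next
        case False
        have "enat (Suc (i - L)) < m" using a False by (cases m) auto
        then have "(f (i-L), f (Suc (i-L))) \<in> E" by (rule fe)
        moreover have "Suc i - L = Suc (i - L)" using False by simp
        ultimately show ?thesis using False by (simp add: h_def)
      qed
    qed
  next
    show "m + enat L = \<infinity> \<or> (\<exists>k. m + enat L = enat (Suc k) \<and> succs E (h k) = {})"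
    proof (cases m)
      case (enat m1)
      then obtain k where "m1 = Suc k" "succs E (f k) = {}" using mp by (auto simp: maximal_path_from_def)
      then have "m + enat L = enat (Suc (k + L)) \<and> succs E (h (k+L)) = {}"
        using enat by (simp add: h_def)
      then show ?thesis by blast
    qed simp
  qed
  then have "occurs_before a b (h, m + enat L)" using ob by blast
  then obtain i where i: "enat i < m + enat L" "h i = a" "\<forall>j\<le>i. h j \<noteq> b"
    by (auto simp: occurs_before_def)
  have iL: "\<not> i < L" using i(2) nab bl by (auto simp: h_def)
  show ?thesis unfolding occurs_before_def
  proof (intro exI[of _ "i - L"] conjI allI impI, simp_all)
    show "enat (i - L) < m" using i(1) iL by (cases m) auto
    show "f (i - L) = a" using i(2) iL by (simp add: h_def)
    fix j assume "j \<le> i - L"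
    then show "f j \<noteq> b" using i(3)[rule_format, of "j + L"] iL by (simp add: h_def)
  qed
qed

lemma before_contra: "occurs_before a b \<pi> \<Longrightarrow> occurs_before b a \<pi> \<Longrightarrow> False"
  unfolding occurs_before_def by (metis nat_le_linear)

theorem lemma4p10:
  fixes V :: "'v set" and E :: "('v \<times> 'v) set" and p s1 s2 :: 'v
  assumes "cfg V E"
    and "p \<in> V"
    and "pred_node E p s1 s2"
    and "card {y. (p, y) \<in> Ap_edges V E p} \<ge> 2"
    and "Vsucc V E p s1 \<inter> Vsucc V E p s2 \<noteq> {}"
  shows "\<not> (\<exists>a b. DOD E p s1 s2 a b)"
proof
  assume "\<exists>a b. DOD E p s1 s2 a b"
  then obtain a b where D: "DOD E p s1 s2 a b" by blast
  have EV: "E \<subseteq> V \<times> V" using assms(1) by (simp add: cfg_def)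
  obtain n where n1: "n \<in> Vsucc V E p s1" and n2: "n \<in> Vsucc V E p s2" using assms(5) by blast
  have all: "\<forall>\<pi>. maximal_path_from E p \<pi> \<longrightarrow> occurs a \<pi> \<and> occurs b \<pi>"
    using D by (simp add: DOD_def)
  have inVp: "x \<in> V \<Longrightarrow> (x = a \<or> x = b) \<Longrightarrow> x \<in> Vp V E p" for x
    using all unfolding Vp_def by blast
  have fpV: "fpath E xs \<Longrightarrow> x \<in> set (butlast xs) \<Longrightarrow> x \<in> V" for xs x
  proof -
    assume fp: "fpath E xs" and x: "x \<in> set (butlast xs)"
    then obtain i where i: "i < length (butlast xs)" "x = butlast xs ! i" by (metis in_set_conv_nth)
    then have "Suc i < length xs" "x = xs ! i" by (auto simp: nth_butlast)
    then have "(x, xs ! Suc i) \<in> E" using fp by (simp add: fpath_def)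
    then show "x \<in> V" using EV by blast
  qed
  obtain f m where mp: "maximal_path_from E n (f, m)" using ex_maximal by (metis prod.exhaust)
  obtain xs1 where x1: "fpath E xs1" "hd xs1 = s1" "last xs1 = n" "\<forall>x\<in>set (butlast xs1). x \<notin> Vp V E p"
    using n1 unfolding Vsucc_def by blast
  obtain xs2 where x2: "fpath E xs2" "hd xs2 = s2" "last xs2 = n" "\<forall>x\<in>set (butlast xs2). x \<notin> Vp V E p"
    using n2 unfolding Vsucc_def by blast
  have "occurs_before a b (f, m)"
    apply (rule key[OF x1(1-3) mp])
    using x1(4) fpV[OF x1(1)] inVp apply blast
    using D by (simp add: DOD_def)
  moreover have "occurs_before b a (f, m)"
    apply (rule key[OF x2(1-3) mp])
    using x2(4) fpV[OF x2(1)] inVp apply blast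
    using D by (simp add: DOD_def)
  ultimately show False by (rule before_contra)
qed

end
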